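(* Let $d\ge1$ and $P\subseteq\mathbb R\times[d]$. The convexity space $(P,\mathcal C_{\equiv}(P))$ admits the colorful fractional Helly theorem for colorful $2$-tuples.
   Context: $[d]=\{1,\dots,d\}$. A (separated) $d$-interval is a set $I=\bigcup_{i\in[d]}\{(x,i): x\in I^{(i)}\}\subseteq\mathbb R\times[d]$ with each $I^{(i)}\subseteq\mathbb R$ convex (possibly empty). For $P\subseteq\mathbb R\times[d]$, $\mathcal C_{\equiv}(P)=\{I\cap P: I \text{ a } d\text{-interval}\}$. A convexity space $(X,\mathcal C)$ admits a colorful fractional Helly theorem for colorful $k$-tuples if there is a function $\beta:(0,1)\to(0,1)$ such that for all finite $\mathcal F_1,\dots,\mathcal F_k\subseteq\mathcal C$ of sizes $n_1,\dots,n_k$ with at least $\alpha n_1\cdots n_k$ colorful $k$-tuples $(C_1,\dots,C_k)\in\mathcal F_1\times\dots\times\mathcal F_k$ having nonempty intersection, some $\mathcal F_i$ contains a subfamily of size at least $\beta(\alpha)|\mathcal F_i|$ with nonempty intersection. *)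

theory Defs
  imports "HOL-Analysis.Analysis"
begin

definition d_interval :: "nat \<Rightarrow> (real \<times> nat) set \<Rightarrow> bool" where
  "d_interval d I \<longleftrightarrow>
     (\<exists>J :: nat \<Rightarrow> real set. (\<forall>i\<in>{1..d}. convex (J i)) \<and>
        I = {(x, i). i \<in> {1..d} \<and> x \<in> J i})"

definition C_equiv :: "nat \<Rightarrow> (real \<times> nat) set \<Rightarrow> (real \<times> nat) set set" where
  "C_equiv d P = {I \<inter> P | I. d_interval d I}"

text \<open>Colorful fractional Helly theorem for colorful k-tuples in the convexity space (X, C).
  Intersections are taken inside the ground set X (the empty intersection is X).\<close>
definition colorful_fractional_helly :: "'a set \<Rightarrow> 'a set set \<Rightarrow> nat \<Rightarrow> bool" where
  "colorful_fractional_helly X C k \<longleftrightarrow>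
     (\<exists>\<beta> :: real \<Rightarrow> real.
        (\<forall>\<alpha>. 0 < \<alpha> \<and> \<alpha> < 1 \<longrightarrow> 0 < \<beta> \<alpha> \<and> \<beta> \<alpha> < 1) \<and>
        (\<forall>\<alpha> (F :: nat \<Rightarrow> 'a set set).
           0 < \<alpha> \<and> \<alpha> < 1 \<and>
           (\<forall>i\<in>{1..k}. finite (F i) \<and> F i \<noteq> {} \<and> F i \<subseteq> C) \<and>
           real (card {f \<in> PiE {1..k} F. X \<inter> \<Inter>(f ` {1..k}) \<noteq> {}})
             \<ge> \<alpha> * (\<Prod>i\<in>{1..k}. real (card (F i)))
           \<longrightarrow> (\<exists>i\<in>{1..k}. \<exists>G \<subseteq> F i.
                  real (card G) \<ge> \<beta> \<alpha> * real (card (F i)) \<and> X \<inter> \<Inter>G \<noteq> {})))"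

end

theory Submission
  imports Defs
begin

lemma C_equiv_sub: "A \<in> C_equiv d P \<Longrightarrow> A \<subseteq> P"
  unfolding C_equiv_def by auto

lemma C_equiv_conv:
  assumes "B \<in> C_equiv d P" "(b,i) \<in> B" "(x,i) \<in> B" "(a,i) \<in> P" "b \<le> a" "a \<le> x"
  shows "(a,i) \<in> B"
proof -
  obtain I where I: "B = I \<inter> P" "d_interval d I" using assms(1) unfolding C_equiv_def by auto
  then obtain J where J: "\<forall>i\<in>{1..d}. convex (J i)" "I = {(x, i). i \<in> {1..d} \<and> x \<in> J i}"
    unfolding d_interval_def by auto
  have i: "i \<in> {1..d}" "b \<in> J i" "x \<in> J i" using assms(2,3) I J by auto
  have "is_interval (J i)" using J(1) i(1) is_interval_convex_1 by auto
  then have "a \<in> J i" using mem_is_interval_1_I i assms(5,6) by blast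
  then show ?thesis using I J i assms(4) by auto
qed

lemma key:
  assumes "A \<in> C_equiv d P" "B \<in> C_equiv d P" "finite W" "(x,i) \<in> A \<inter> B \<inter> W"
  shows "(Min {y. (y,i) \<in> A \<inter> W}, i) \<in> B \<or> (Min {y. (y,i) \<in> B \<inter> W}, i) \<in> A"
proof -
  have fA: "finite {y. (y,i) \<in> A \<inter> W}"
    by (rule finite_subset[of _ "fst ` W"]) (use assms(3) in force)+
  have fB: "finite {y. (y,i) \<in> B \<inter> W}"
    by (rule finite_subset[of _ "fst ` W"]) (use assms(3) in force)+
  define a where "a = Min {y. (y,i) \<in> A \<inter> W}"
  define b where "b = Min {y. (y,i) \<in> B \<inter> W}"
  have a: "(a,i) \<in> A" "a \<le> x" using Min_in[OF fA] Min_le[OF fA] assms(4) unfolding a_def by auto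
  have b: "(b,i) \<in> B" "b \<le> x" using Min_in[OF fB] Min_le[OF fB] assms(4) unfolding b_def by auto
  show ?thesis
  proof (cases "b \<le> a")
    case True
    have "(a,i) \<in> P" using a C_equiv_sub[OF assms(1)] by auto
    then have "(a,i) \<in> B" using C_equiv_conv[OF assms(2) b(1), of x a] assms(4) True a by auto
    then show ?thesis unfolding a_def by auto
  next
    case False
    have "(b,i) \<in> P" using b C_equiv_sub[OF assms(2)] by auto
    then have "(b,i) \<in> A" using C_equiv_conv[OF assms(1) a(1), of x b] assms(4) False b by auto
    then show ?thesis unfolding b_def by auto
  qed
qed

theorem lemma3:
  fixes d :: nat and P :: "(real \<times> nat) set"
  assumes "d \<ge> 1" and "P \<subseteq> UNIV \<times> {1..d}"
  shows "colorful_fractional_helly P (C_equiv d P) 2"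
proof -
  have bpos: "\<forall>\<alpha>::real. 0 < \<alpha> \<and> \<alpha> < 1 \<longrightarrow> 0 < \<alpha> / (4 * real d) \<and> \<alpha> / (4 * real d) < 1"
    using assms(1) by (auto simp: field_simps)
  show ?thesis
  unfolding colorful_fractional_helly_def
proof (rule exI[of _ "\<lambda>\<alpha>::real. \<alpha> / (4 * real d)"], rule conjI[OF bpos], intro allI impI)
  fix \<alpha> :: real and F :: "nat \<Rightarrow> (real \<times> nat) set set"
  assume H: "0 < \<alpha> \<and> \<alpha> < 1 \<and>
           (\<forall>i\<in>{1..2}. finite (F i) \<and> F i \<noteq> {} \<and> F i \<subseteq> C_equiv d P) \<and>
           real (card {f \<in> PiE {1..2} F. P \<inter> \<Inter>(f ` {1..2}) \<noteq> {}})
             \<ge> \<alpha> * (\<Prod>i\<in>{1..2}. real (card (F i)))"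
  define c where "c = \<alpha> / (4 * real d)"
  have two: "{1..2::nat} = {1,2}" by auto
  have al: "0 < \<alpha>" using H by auto
  have F1: "finite (F 1)" "F 1 \<noteq> {}" "F 1 \<subseteq> C_equiv d P" using H by auto
  have F2: "finite (F 2)" "F 2 \<noteq> {}" "F 2 \<subseteq> C_equiv d P" using H by auto
  define n1 where "n1 = real (card (F 1))"
  define n2 where "n2 = real (card (F 2))"
  have n1: "n1 > 0" using F1 unfolding n1_def by (simp add: card_gt_0_iff)
  have n2: "n2 > 0" using F2 unfolding n2_def by (simp add: card_gt_0_iff)
  have cpos: "c > 0" using al assms(1) unfolding c_def by auto
  define S where "S = {f \<in> PiE {1..2} F. P \<inter> \<Inter>(f ` {1..2}) \<noteq> {}}"
  define T where "T = {(A,B). A \<in> F 1 \<and> B \<in> F 2 \<and> A \<inter> B \<inter> P \<noteq> {}}"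
  have Sge: "real (card S) \<ge> \<alpha> * n1 * n2" using H unfolding S_def n1_def n2_def two by simp
  have finT: "finite T"
  proof -
    have "T \<subseteq> F 1 \<times> F 2" unfolding T_def by blast
    then show ?thesis using F1(1) F2(1) finite_subset by blast
  qed
  have ST: "card S \<le> card T"
  proof (rule card_inj_on_le[of "\<lambda>f. (f 1, f 2)"])
    show "inj_on (\<lambda>f. (f 1, f 2)) S"
    proof (rule inj_onI)
      fix f g assume fg: "f \<in> S" "g \<in> S" "(f 1, f 2) = (g 1, g 2)"
      have fgP: "f \<in> PiE {1,2} F" "g \<in> PiE {1,2} F" using fg(1,2) unfolding S_def two by auto
      show "f = g"
      proof
        fix x show "f x = g x"
        proof (cases "x \<in> {1,2}")
          case True then show ?thesis using fg(3) by auto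
        next
          case False then show ?thesis using PiE_arb[OF fgP(1) False] PiE_arb[OF fgP(2) False] by simp
        qed
      qed
    qed
    show "(\<lambda>f. (f 1, f 2)) ` S \<subseteq> T" unfolding S_def T_def two by (auto simp: PiE_iff)
    show "finite T" by (rule finT)
  qed
  define W where "W = (\<lambda>(A,B). SOME p. p \<in> A \<inter> B \<inter> P) ` T"
  have finW: "finite W" unfolding W_def using finT by auto
  define SA where "SA = (\<lambda>A i. {y. (y,i) \<in> A \<inter> W})"
  define X1 where "X1 = (\<lambda>A i. {B \<in> F 2. SA A i \<noteq> {} \<and> (Min (SA A i), i) \<in> B})"
  define X2 where "X2 = (\<lambda>B i. {A \<in> F 1. SA B i \<noteq> {} \<and> (Min (SA B i), i) \<in> A})"
  have finSA: "finite (SA A i)" for A i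
    by (rule finite_subset[of _ "fst ` W"]) (use finW in \<open>force simp: SA_def\<close>)+
  have ptP: "(Min (SA A i), i) \<in> P \<inter> A" if "A \<in> C_equiv d P" "SA A i \<noteq> {}" for A i
  proof -
    have "Min (SA A i) \<in> SA A i" using Min_in[OF finSA that(2)] .
    then show ?thesis using C_equiv_sub[OF that(1)] unfolding SA_def by auto
  qed
  show "\<exists>i\<in>{1..2}. \<exists>G\<subseteq>F i. real (card G) \<ge> \<alpha> / (4 * real d) * real (card (F i)) \<and> P \<inter> \<Inter>G \<noteq> {}"
  proof (cases "\<exists>A\<in>F 1. \<exists>i. real (card (X1 A i)) \<ge> c * n2")
    case True
    then obtain A i where Ai: "A \<in> F 1" "real (card (X1 A i)) \<ge> c * n2" by auto
    then have "X1 A i \<noteq> {}" using mult_pos_pos[OF cpos n2] by auto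
    then have ne: "SA A i \<noteq> {}" unfolding X1_def by auto
    have "(Min (SA A i), i) \<in> P \<inter> \<Inter>(X1 A i)" using ptP[OF _ ne] Ai F1 unfolding X1_def by auto
    then show ?thesis using Ai unfolding c_def n2_def
      by (intro bexI[of _ 2] exI[of _ "X1 A i"]) (auto simp: X1_def)
  next
    case False1: False
    show ?thesis
    proof (cases "\<exists>B\<in>F 2. \<exists>i. real (card (X2 B i)) \<ge> c * n1")
      case True
      then obtain B i where Bi: "B \<in> F 2" "real (card (X2 B i)) \<ge> c * n1" by auto
      then have "X2 B i \<noteq> {}" using mult_pos_pos[OF cpos n1] by auto
      then have ne: "SA B i \<noteq> {}" unfolding X2_def by auto
      have "(Min (SA B i), i) \<in> P \<inter> \<Inter>(X2 B i)" using ptP[OF _ ne] Bi F2 unfolding X2_def by auto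
      then show ?thesis using Bi unfolding c_def n1_def
        by (intro bexI[of _ 1] exI[of _ "X2 B i"]) (auto simp: X2_def)
    next
      case False2: False
      define T1 where "T1 = (\<Union>A\<in>F 1. \<Union>i\<in>{1..d}. {A} \<times> X1 A i)"
      define T2 where "T2 = (\<Union>B\<in>F 2. \<Union>i\<in>{1..d}. X2 B i \<times> {B})"
      have TT: "T \<subseteq> T1 \<union> T2"
      proof
        fix p assume p: "p \<in> T"
        then obtain A B where AB: "p = (A,B)" "A \<in> F 1" "B \<in> F 2" "A \<inter> B \<inter> P \<noteq> {}"
          unfolding T_def by auto
        define w where "w = (SOME p. p \<in> A \<inter> B \<inter> P)"
        have w: "w \<in> A \<inter> B \<inter> P" unfolding w_def using AB(4) by (metis ex_in_conv someI_ex)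
        have wW: "w \<in> W" unfolding W_def w_def using p AB(1) by force
        obtain x i where xi: "w = (x,i)" by fastforce
        have i: "i \<in> {1..d}" using w xi assms(2) by auto
        have A: "A \<in> C_equiv d P" and B: "B \<in> C_equiv d P" using AB F1 F2 by auto
        have neA: "SA A i \<noteq> {}" and neB: "SA B i \<noteq> {}" using w wW xi unfolding SA_def by auto
        have "(Min (SA A i), i) \<in> B \<or> (Min (SA B i), i) \<in> A"
          using key[OF A B finW, of x i] w wW xi unfolding SA_def by auto
        then show "p \<in> T1 \<union> T2"
        proof
          assume "(Min (SA A i), i) \<in> B"
          then have "B \<in> X1 A i" using AB neA unfolding X1_def by auto
          then show ?thesis using AB i unfolding T1_def by auto
        next
          assume "(Min (SA B i), i) \<in> A"
          then have "A \<in> X2 B i" using AB neB unfolding X2_def by auto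
          then show ?thesis using AB i unfolding T2_def by auto
        qed
      qed
      have finX1: "finite (X1 A i)" for A i using F2 unfolding X1_def by auto
      have finX2: "finite (X2 B i)" for B i using F1 unfolding X2_def by auto
      have "card T1 \<le> (\<Sum>A\<in>F 1. card (\<Union>i\<in>{1..d}. {A} \<times> X1 A i))"
        unfolding T1_def by (rule card_UN_le[OF F1(1)])
      also have "\<dots> \<le> (\<Sum>A\<in>F 1. \<Sum>i\<in>{1..d}. card ({A} \<times> X1 A i))"
        by (rule sum_mono) (rule card_UN_le, simp)
      finally have T1le: "real (card T1) \<le> (\<Sum>A\<in>F 1. \<Sum>i\<in>{1..d}. real (card (X1 A i)))"
        by (simp add: card_cartesian_product flip: of_nat_sum)
      also have "\<dots> \<le> (\<Sum>A\<in>F 1. \<Sum>i\<in>{1..d}. c * n2)"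
        using False1 by (intro sum_mono) (auto simp: not_le intro: less_imp_le)
      also have "\<dots> = n1 * real d * c * n2" unfolding n1_def by simp
      finally have T1b: "real (card T1) \<le> n1 * real d * c * n2" .
      have "card T2 \<le> (\<Sum>B\<in>F 2. card (\<Union>i\<in>{1..d}. X2 B i \<times> {B}))"
        unfolding T2_def by (rule card_UN_le[OF F2(1)])
      also have "\<dots> \<le> (\<Sum>B\<in>F 2. \<Sum>i\<in>{1..d}. card (X2 B i \<times> {B}))"
        by (rule sum_mono) (rule card_UN_le, simp)
      finally have "real (card T2) \<le> (\<Sum>B\<in>F 2. \<Sum>i\<in>{1..d}. real (card (X2 B i)))"
        by (simp add: card_cartesian_product flip: of_nat_sum)
      also have "\<dots> \<le> (\<Sum>B\<in>F 2. \<Sum>i\<in>{1..d}. c * n1)"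
        using False2 by (intro sum_mono) (auto simp: not_le intro: less_imp_le)
      also have "\<dots> = n2 * real d * c * n1" unfolding n2_def by simp
      finally have T2b: "real (card T2) \<le> n2 * real d * c * n1" .
      have finT12: "finite T1" "finite T2" unfolding T1_def T2_def using F1 F2 finX1 finX2 by auto
      have "card T \<le> card (T1 \<union> T2)" by (rule card_mono) (use finT12 TT in auto)
      also have "\<dots> \<le> card T1 + card T2" by (rule card_Un_le)
      finally have "real (card T) \<le> real (card T1) + real (card T2)" by linarith
      also have "\<dots> \<le> 2 * (real d * c) * n1 * n2" using T1b T2b by (simp add: algebra_simps)
      also have "real d * c = \<alpha> / 4" unfolding c_def using assms(1) by simp
      finally have "real (card T) \<le> \<alpha> * n1 * n2 / 2" by simp
      moreover have "\<alpha> * n1 * n2 > 0" using al n1 n2 by simp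
      ultimately show ?thesis using Sge ST by linarith
    qed
  qed
qed
qed

end
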